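(* Let $\boldsymbol u_1,\ldots,\boldsymbol u_p\in L^2(\Omega,\mathbb R^n)$. Define recursively $$\boldsymbol v_1=\boldsymbol u_1,\qquad \boldsymbol v_i=\boldsymbol u_i-\sum_{k=1}^{i-1}Z_{ik}\boldsymbol v_k\quad(i=2,\ldots,p),$$ where $$Z_{ik}=\mathbb E_{u_iv_k}\mathbb E_{v_kv_k}^{\dagger}+A_{ik}\big(I-\mathbb E_{v_kv_k}\mathbb E_{v_kv_k}^{\dagger}\big)$$ with arbitrary matrices $A_{ik}\in\mathbb R^{n\times n}$ (no invertibility of $\mathbb E_{v_kv_k}$ is assumed). Then $\boldsymbol v_1,\ldots,\boldsymbol v_p$ are pairwise orthogonal: $\mathbb E_{v_iv_j}=\mathbb O$ for all $i\neq j$.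
   Context: $(\Omega,\Sigma,\mu)$ is a probability space and $E[\cdot]$ denotes expectation. For random vectors $\boldsymbol g,\boldsymbol h$, $\mathbb E_{gh}:=E[\boldsymbol g\boldsymbol h^T]-E[\boldsymbol g]E[\boldsymbol h]^T$. $M^\dagger$ denotes the Moore–Penrose pseudo-inverse of a matrix $M$. Matrices act on random vectors pointwise in $\omega$. *)

theory Defs
  imports "HOL-Probability.Probability"
begin

definition pinv :: "real^'n^'n \<Rightarrow> real^'n^'n" where
  "pinv A = (THE X. A ** X ** A = A \<and> X ** A ** X = X \<and>
                    transpose (A ** X) = A ** X \<and> transpose (X ** A) = X ** A)"

definition vexp :: "'a measure \<Rightarrow> ('a \<Rightarrow> real^'n) \<Rightarrow> real^'n" where
  "vexp M g = (\<chi> i. integral\<^sup>L M (\<lambda>\<omega>. g \<omega> $ i))"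

definition covm :: "'a measure \<Rightarrow> ('a \<Rightarrow> real^'n) \<Rightarrow> ('a \<Rightarrow> real^'n) \<Rightarrow> real^'n^'n" where
  "covm M g h = (\<chi> i j. integral\<^sup>L M (\<lambda>\<omega>. g \<omega> $ i * h \<omega> $ j))
               - (\<chi> i j. vexp M g $ i * vexp M h $ j)"

definition L2vec :: "'a measure \<Rightarrow> ('a \<Rightarrow> real^'n) \<Rightarrow> bool" where
  "L2vec M g \<longleftrightarrow> g \<in> borel_measurable M \<and> integrable M (\<lambda>\<omega>. (norm (g \<omega>))\<^sup>2)"

end

theory Submission
  imports Defs
begin


lemma inner_mv_transpose: "(A *v x) \<bullet> (y::real^'n) = x \<bullet> (transpose A *v y)"
  by (metis dot_lmul_matrix inner_commute transpose_matrix_vector)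

lemma proj_ex:
  fixes S :: "(real^'n) set" assumes S: "subspace S"
  obtains P :: "real^'n^'n" where "\<And>x. P *v x \<in> S" "\<And>x w. w \<in> S \<Longrightarrow> (x - P *v x) \<bullet> w = 0"
proof -
  have "\<exists>y. y \<in> S \<and> (\<forall>w\<in>S. (x - y) \<bullet> w = 0)" for x
  proof -
    obtain y z where "y \<in> span S" "\<And>w. w \<in> span S \<Longrightarrow> orthogonal z w" "x = y + z"
      using orthogonal_subspace_decomp_exists[of S x] by metis
    moreover have "span S = S" using S by (simp add: span_eq_iff)
    ultimately show ?thesis by (intro exI[of _ y]) (auto simp: orthogonal_def)
  qed
  then obtain p where p: "\<And>x. p x \<in> S" "\<And>x w. w\<in>S \<Longrightarrow> (x - p x) \<bullet> w = 0" by metis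
  have uniq: "y = p x" if "y \<in> S" "\<forall>w\<in>S. (x - y) \<bullet> w = 0" for x y
  proof -
    have d: "y - p x \<in> S" using that p S by (simp add: subspace_diff)
    have "(y - p x) \<bullet> (y - p x) = (x - p x) \<bullet> (y - p x) - (x - y) \<bullet> (y - p x)"
      by (simp add: algebra_simps)
    also have "\<dots> = 0" using d p that by simp
    finally show ?thesis by simp
  qed
  have "linear p"
  proof (rule linearI)
    fix x y
    show "p (x + y) = p x + p y"
    proof (rule uniq[symmetric])
      show "p x + p y \<in> S" using S p subspace_add by blast
      show "\<forall>w\<in>S. (x + y - (p x + p y)) \<bullet> w = 0"
      proof
        fix w assume "w \<in> S"
        then have "(x - p x) \<bullet> w = 0" "(y - p y) \<bullet> w = 0" using p by auto
        then show "(x + y - (p x + p y)) \<bullet> w = 0" by (simp add: algebra_simps inner_diff_left inner_add_left)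
      qed
    qed
    fix c :: real
    show "p (c *\<^sub>R x) = c *\<^sub>R p x"
    proof (rule uniq[symmetric])
      show "c *\<^sub>R p x \<in> S" using S p subspace_scale by blast
      show "\<forall>w\<in>S. (c *\<^sub>R x - c *\<^sub>R p x) \<bullet> w = 0"
        using p(2)[of _ x] by (simp add: scaleR_diff_right[symmetric])
    qed
  qed
  then have "\<And>x. matrix p *v x = p x" by (simp add: matrix_works linear_matrix_vector_mul_eq)
  then show ?thesis using that p by metis
qed

lemma proj_fix:
  fixes P :: "real^'n^'n"
  assumes S: "subspace S" and P1: "\<And>x. P *v x \<in> S" and P2: "\<And>x w. w \<in> S \<Longrightarrow> (x - P *v x) \<bullet> w = 0"
    and y: "y \<in> S"
  shows "P *v y = y"
proof -
  have "y - P *v y \<in> S" using S y P1 by (simp add: subspace_diff)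
  then have "(y - P *v y) \<bullet> (y - P *v y) = 0" using P2 by blast
  then show ?thesis by simp
qed

lemma sym_transpose:
  fixes P :: "real^'n^'n"
  assumes "\<And>x y. (P *v x) \<bullet> y = x \<bullet> (P *v y)"
  shows "transpose P = P"
proof -
  have "P $ j $ i = P $ i $ j" for i j
  proof -
    have "P $ j $ i = (P *v axis i 1) \<bullet> axis j 1"
      by (simp add: cart_eq_inner_axis[symmetric] matrix_vector_mult_basis column_def)
    also have "\<dots> = (P *v axis j 1) \<bullet> axis i 1" using assms by (simp add: inner_commute)
    also have "\<dots> = P $ i $ j"
      by (simp add: cart_eq_inner_axis[symmetric] matrix_vector_mult_basis column_def)
    finally show ?thesis .
  qed
  then show ?thesis by (simp add: transpose_def vec_eq_iff)
qed

lemma proj_sym: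
  fixes P :: "real^'n^'n"
  assumes S: "subspace S" and P1: "\<And>x. P *v x \<in> S" and P2: "\<And>x w. w \<in> S \<Longrightarrow> (x - P *v x) \<bullet> w = 0"
  shows "transpose P = P"
proof (rule sym_transpose)
  fix x y
  have "y \<bullet> (P *v x) = (P *v y) \<bullet> (P *v x)"
    using P2[OF P1[of x], of y] by (simp add: inner_diff_left)
  then have a: "(P *v x) \<bullet> y = (P *v x) \<bullet> (P *v y)" by (simp add: inner_commute)
  have b: "x \<bullet> (P *v y) = (P *v x) \<bullet> (P *v y)"
    using P2[OF P1[of y], of x] by (simp add: inner_diff_left)
  show "(P *v x) \<bullet> y = x \<bullet> (P *v y)" using a b by simp
qed

definition penrose :: "real^'n^'n \<Rightarrow> real^'n^'n \<Rightarrow> bool" where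
  "penrose A X \<longleftrightarrow> A ** X ** A = A \<and> X ** A ** X = X \<and>
                    transpose (A ** X) = A ** X \<and> transpose (X ** A) = X ** A"

lemma penrose_unique:
  assumes X: "penrose A X" and Y: "penrose A Y"
  shows "X = Y"
proof -
  let ?T = transpose
  have x1: "A ** X ** A = A" "X ** A ** X = X" "?T X ** ?T A = A ** X" "?T A ** ?T X = X ** A"
    using X unfolding penrose_def by (auto simp: matrix_transpose_mul)
  have y1: "A ** Y ** A = A" "Y ** A ** Y = Y" "?T Y ** ?T A = A ** Y" "?T A ** ?T Y = Y ** A"
    using Y unfolding penrose_def by (auto simp: matrix_transpose_mul)
  have tA1: "?T A = ?T A ** (A ** Y)"
    by (metis y1(1) y1(3) matrix_transpose_mul matrix_mul_assoc)
  have tA2: "?T A = (X ** A) ** ?T A"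
    by (metis x1(1) x1(4) matrix_transpose_mul matrix_mul_assoc)
  have "X = X ** (?T X ** ?T A)" by (metis x1(2) x1(3) matrix_mul_assoc)
  also have "\<dots> = X ** (?T X ** ?T A) ** A ** Y" by (metis tA1 matrix_mul_assoc)
  also have "\<dots> = X ** A ** Y" by (metis x1(2) x1(3) matrix_mul_assoc)
  finally have ex: "X = X ** A ** Y" .
  have "Y = (?T A ** ?T Y) ** Y" by (metis y1(2) y1(4) matrix_mul_assoc)
  also have "\<dots> = X ** A ** (?T A ** ?T Y) ** Y" by (metis tA2 matrix_mul_assoc)
  also have "\<dots> = X ** A ** Y" by (metis y1(2) y1(4) matrix_mul_assoc)
  finally show ?thesis using ex by simp
qed

lemma penrose_exists:
  fixes A :: "real^'n^'n"
  shows "\<exists>X. penrose A X"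
proof -
  let ?R = "range (\<lambda>y. transpose A *v y)" and ?I = "range (\<lambda>y. A *v y)"
  have sR: "subspace ?R" and sI: "subspace ?I"
    by (rule real_vector.linear_subspace_image[OF matrix_vector_mul_linear subspace_UNIV])+
  obtain PR :: "real^'n^'n" where PR: "\<And>x. PR *v x \<in> ?R" "\<And>x w. w \<in> ?R \<Longrightarrow> (x - PR *v x) \<bullet> w = 0"
    using proj_ex[OF sR] by blast
  obtain PI :: "real^'n^'n" where PI: "\<And>x. PI *v x \<in> ?I" "\<And>x w. w \<in> ?I \<Longrightarrow> (x - PI *v x) \<bullet> w = 0"
    using proj_ex[OF sI] by blast
  have K: "A *v (PR *v y) = A *v y" for y
  proof -
    have "(A *v (y - PR *v y)) \<bullet> (A *v (y - PR *v y)) = 0"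
      using PR(2)[of "transpose A *v (A *v (y - PR *v y))" y] by (simp add: inner_mv_transpose)
    then show ?thesis by (simp add: matrix_vector_mult_diff_distrib)
  qed
  have spanR: "span ?R = ?R" using sR by (simp add: span_eq_iff)
  have inj: "inj_on (\<lambda>y. A *v y) (span ?R)"
    unfolding spanR
  proof (subst real_vector.linear_inj_on_iff_eq_0[OF _ sR], simp, intro ballI impI)
    fix x assume "x \<in> ?R" "A *v x = 0"
    then obtain w where w: "x = transpose A *v w" by auto
    have "x \<bullet> x = w \<bullet> (A *v x)" using w by (metis inner_mv_transpose inner_commute)
    then show "x = 0" using \<open>A *v x = 0\<close> by simp
  qed
  obtain g where g: "range g \<subseteq> span ?R" "linear g" "\<And>x. x \<in> span ?R \<Longrightarrow> g (A *v x) = x"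
    using real_vector.linear_inj_on_left_inverse[OF _ inj] by auto
  have gR: "g z \<in> ?R" for z using g(1) unfolding spanR by blast
  have gA: "g (A *v y) = PR *v y" for y
    by (metis K g(3) spanR PR(1))
  define X where "X = matrix (\<lambda>z. g (PI *v z))"
  have lX: "linear (\<lambda>z. g (PI *v z))"
    using g(2) by (intro linear_compose[unfolded o_def, OF matrix_vector_mul_linear]) 
  have Xv: "X *v z = g (PI *v z)" for z
    unfolding X_def using lX by (simp add: matrix_works linear_matrix_vector_mul_eq)
  have PIA: "PI *v (A *v y) = A *v y" for y
    by (rule proj_fix[OF sI PI]) auto
  have AX: "A ** X = PI"
  proof (subst matrix_eq, intro allI)
    fix z
    obtain y where y: "PI *v z = A *v y" using PI(1)[of z] by auto
    show "(A ** X) *v z = PI *v z"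
      by (simp add: matrix_vector_mul_assoc[symmetric] Xv y gA K)
  qed
  have XA: "X ** A = PR"
    by (subst matrix_eq) (simp add: matrix_vector_mul_assoc[symmetric] Xv PIA gA)
  have "penrose A X"
    unfolding penrose_def
  proof (intro conjI)
    show "A ** X ** A = A" by (subst matrix_eq) (simp add: AX PIA matrix_vector_mul_assoc[symmetric])
    show "X ** A ** X = X"
    proof (subst matrix_eq, intro allI)
      fix z
      obtain y where y: "g (PI *v z) = transpose A *v y" using gR by blast
      have "PR *v (X *v z) = X *v z" unfolding Xv by (rule proj_fix[OF sR PR gR])
      then show "(X ** A ** X) *v z = X *v z"
        by (simp add: XA matrix_vector_mul_assoc[symmetric])
    qed
    show "transpose (A ** X) = A ** X" using AX proj_sym[OF sI PI] by simp
    show "transpose (X ** A) = X ** A" using XA proj_sym[OF sR PR] by simp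
  qed
  then show ?thesis by blast
qed

lemma pinv_penrose: "penrose A (pinv A)"
proof -
  obtain X where X: "penrose A X" using penrose_exists by blast
  have "pinv A = X"
    unfolding pinv_def using X penrose_unique[of A] unfolding penrose_def[symmetric]
    by (intro the_equality) auto
  then show ?thesis using X by simp
qed



definition L2s :: "'a measure \<Rightarrow> ('a \<Rightarrow> real) \<Rightarrow> bool" where
  "L2s M a \<longleftrightarrow> a \<in> borel_measurable M \<and> integrable M (\<lambda>\<omega>. (a \<omega>)\<^sup>2)"

definition cv :: "'a measure \<Rightarrow> ('a \<Rightarrow> real) \<Rightarrow> ('a \<Rightarrow> real) \<Rightarrow> real" where
  "cv M a b = (\<integral>\<omega>. a \<omega> * b \<omega> \<partial>M) - (\<integral>\<omega>. a \<omega> \<partial>M) * (\<integral>\<omega>. b \<omega> \<partial>M)"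

definition L2V :: "'a measure \<Rightarrow> ('a \<Rightarrow> real^'n) \<Rightarrow> bool" where
  "L2V M g \<longleftrightarrow> (\<forall>i. L2s M (\<lambda>\<omega>. g \<omega> $ i))"

lemma abs_mult_le_sq: "\<bar>a * b\<bar> \<le> a\<^sup>2 + (b::real)\<^sup>2"
proof -
  have "2 * \<bar>a\<bar> * \<bar>b\<bar> \<le> \<bar>a\<bar>\<^sup>2 + \<bar>b\<bar>\<^sup>2" by (rule sum_squares_bound)
  moreover have "0 \<le> \<bar>a\<bar> * \<bar>b\<bar>" by simp
  ultimately have "\<bar>a\<bar> * \<bar>b\<bar> \<le> a\<^sup>2 + b\<^sup>2" by (simp only: power2_abs)
  then show ?thesis by (simp add: abs_mult)
qed

lemma L2s_mult_int:
  assumes "L2s M a" "L2s M b" shows "integrable M (\<lambda>\<omega>. a \<omega> * b \<omega>)"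
proof (rule Bochner_Integration.integrable_bound[of M "\<lambda>\<omega>. (a \<omega>)\<^sup>2 + (b \<omega>)\<^sup>2"])
  show "integrable M (\<lambda>\<omega>. (a \<omega>)\<^sup>2 + (b \<omega>)\<^sup>2)" using assms unfolding L2s_def by auto
  show "(\<lambda>\<omega>. a \<omega> * b \<omega>) \<in> borel_measurable M" using assms unfolding L2s_def by auto
  show "AE \<omega> in M. norm (a \<omega> * b \<omega>) \<le> norm ((a \<omega>)\<^sup>2 + (b \<omega>)\<^sup>2)"
    using abs_mult_le_sq by auto
qed

lemma L2s_add: assumes "L2s M a" "L2s M b" shows "L2s M (\<lambda>\<omega>. a \<omega> + b \<omega>)"
proof -
  have "integrable M (\<lambda>\<omega>. (a \<omega>)\<^sup>2 + (b \<omega>)\<^sup>2 + 2 * (a \<omega> * b \<omega>))"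
    using L2s_mult_int[OF assms] assms unfolding L2s_def by auto
  moreover have "(\<lambda>\<omega>. (a \<omega>)\<^sup>2 + (b \<omega>)\<^sup>2 + 2 * (a \<omega> * b \<omega>)) = (\<lambda>\<omega>. (a \<omega> + b \<omega>)\<^sup>2)"
    by (simp add: power2_sum algebra_simps)
  ultimately show ?thesis using assms unfolding L2s_def by auto
qed

lemma L2s_cmult: "L2s M a \<Longrightarrow> L2s M (\<lambda>\<omega>. c * a \<omega>)"
  unfolding L2s_def by (auto simp: power_mult_distrib)

lemma L2s_diff: "L2s M a \<Longrightarrow> L2s M b \<Longrightarrow> L2s M (\<lambda>\<omega>. a \<omega> - b \<omega>)"
  using L2s_add[of M a "\<lambda>\<omega>. (-1) * b \<omega>"] L2s_cmult[of M b "-1"] by simp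

lemma L2s_zero: "L2s M (\<lambda>\<omega>. 0)"
  unfolding L2s_def by auto

lemma L2s_sum: "finite K \<Longrightarrow> (\<And>k. k \<in> K \<Longrightarrow> L2s M (f k)) \<Longrightarrow> L2s M (\<lambda>\<omega>. \<Sum>k\<in>K. f k \<omega>)"
  by (induction K rule: finite_induct) (auto intro: L2s_add L2s_zero)

context prob_space
begin

lemma L2s_one: "L2s M (\<lambda>\<omega>. 1)"
  unfolding L2s_def by auto

lemma L2s_int: "L2s M a \<Longrightarrow> integrable M a"
  using L2s_mult_int[OF _ L2s_one, of a] by simp

lemma cv_diff: "L2s M a \<Longrightarrow> L2s M b \<Longrightarrow> L2s M c \<Longrightarrow>
  cv M (\<lambda>\<omega>. a \<omega> - b \<omega>) c = cv M a c - cv M b c"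
  unfolding cv_def using L2s_mult_int[of M a c] L2s_mult_int[of M b c] L2s_int[of a] L2s_int[of b]
  by (simp add: left_diff_distrib algebra_simps)

lemma cv_cmult: "cv M (\<lambda>\<omega>. k * a \<omega>) b = k * cv M a b"
  unfolding cv_def by (simp add: algebra_simps)

lemma cv_sum: "finite K \<Longrightarrow> (\<And>k. k \<in> K \<Longrightarrow> L2s M (f k)) \<Longrightarrow> L2s M b \<Longrightarrow>
  cv M (\<lambda>\<omega>. \<Sum>k\<in>K. f k \<omega>) b = (\<Sum>k\<in>K. cv M (f k) b)"
  unfolding cv_def using L2s_mult_int[of M _ b] L2s_int
  by (simp add: sum_distrib_right integral_sum sum_subtractf)

lemma cv_sym: "cv M a b = cv M b a"
  unfolding cv_def by (simp add: mult.commute)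

lemma cv_nonneg: assumes "L2s M a" shows "cv M a a \<ge> 0"
proof -
  define m where "m = (\<integral>\<omega>. a \<omega> \<partial>M)"
  have ia: "integrable M a" using L2s_int assms .
  have ia2: "integrable M (\<lambda>\<omega>. a \<omega> * a \<omega>)" using L2s_mult_int assms by blast
  have "(\<integral>\<omega>. (a \<omega> - m)\<^sup>2 \<partial>M) = (\<integral>\<omega>. a \<omega> * a \<omega> - 2 * m * a \<omega> + m * m \<partial>M)"
    by (simp add: power2_eq_square algebra_simps)
  also have "\<dots> = (\<integral>\<omega>. a \<omega> * a \<omega> \<partial>M) - 2 * m * m + m * m"
    using ia ia2 by (simp add: m_def prob_space)
  also have "\<dots> = cv M a a" unfolding cv_def m_def by simp
  finally show ?thesis by (metis integral_nonneg_AE AE_I2 zero_le_power2)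
qed

lemma cv_zero_var:
  assumes a: "L2s M a" and b: "L2s M b" and bb: "cv M b b = 0"
  shows "cv M a b = 0"
proof (rule ccontr)
  assume ne: "cv M a b \<noteq> 0"
  define t where "t = - (cv M a a + 1) / (2 * cv M a b)"
  have Lt: "L2s M (\<lambda>\<omega>. t * b \<omega>)" using b by (rule L2s_cmult)
  have "cv M (\<lambda>\<omega>. a \<omega> + t * b \<omega>) (\<lambda>\<omega>. a \<omega> + t * b \<omega>)
      = cv M a a + 2 * t * cv M a b + t * t * cv M b b"
  proof -
    have i1: "integrable M (\<lambda>\<omega>. a \<omega> * b \<omega>)" "integrable M (\<lambda>\<omega>. a \<omega> * a \<omega>)"
      "integrable M (\<lambda>\<omega>. b \<omega> * b \<omega>)" "integrable M a" "integrable M b"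
      using a b L2s_mult_int L2s_int by blast+
    have e1: "(\<integral>\<omega>. (a \<omega> + t * b \<omega>) * (a \<omega> + t * b \<omega>) \<partial>M)
       = (\<integral>\<omega>. a \<omega> * a \<omega> + ((t * t) * (b \<omega> * b \<omega>) + (2 * t) * (a \<omega> * b \<omega>)) \<partial>M)"
      by (simp add: algebra_simps)
    also have "\<dots> = (\<integral>\<omega>. a \<omega> * a \<omega> \<partial>M) + ((t * t) * (\<integral>\<omega>. b \<omega> * b \<omega> \<partial>M)
        + (2 * t) * (\<integral>\<omega>. a \<omega> * b \<omega> \<partial>M))"
      using i1 by simp
    finally have e1': "(\<integral>\<omega>. (a \<omega> + t * b \<omega>) * (a \<omega> + t * b \<omega>) \<partial>M) = \<dots>" .
    have e2: "(\<integral>\<omega>. a \<omega> + t * b \<omega> \<partial>M) = (\<integral>\<omega>. a \<omega> \<partial>M) + t * (\<integral>\<omega>. b \<omega> \<partial>M)"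
      using i1 by simp
    show ?thesis unfolding cv_def e1' e2 by (simp add: algebra_simps)
  qed
  also have "\<dots> = -1" using ne bb by (simp add: t_def field_simps)
  finally show False using cv_nonneg[OF L2s_add[OF a Lt]] by simp
qed

end


lemma matrix_diff_ldistrib: "(A::real^'n^'n) ** (B - C) = A ** B - A ** C"
  by (simp add: matrix_matrix_mult_def vec_eq_iff algebra_simps sum_subtractf)

lemma covm_entry: "covm M g h $ i $ j = cv M (\<lambda>\<omega>. g \<omega> $ i) (\<lambda>\<omega>. h \<omega> $ j)"
  unfolding covm_def vexp_def cv_def by simp

lemma L2vec_L2V: assumes "L2vec M g" shows "L2V M g"
  unfolding L2V_def L2s_def
proof (intro allI conjI)
  fix i
  have gm: "g \<in> borel_measurable M" using assms unfolding L2vec_def by auto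
  show m: "(\<lambda>\<omega>. g \<omega> $ i) \<in> borel_measurable M" using gm by (simp add: cart_eq_inner_axis)
  show "integrable M (\<lambda>\<omega>. (g \<omega> $ i)\<^sup>2)"
  proof (rule Bochner_Integration.integrable_bound[of M "\<lambda>\<omega>. (norm (g \<omega>))\<^sup>2"])
    show "integrable M (\<lambda>\<omega>. (norm (g \<omega>))\<^sup>2)" using assms unfolding L2vec_def by auto
    show "(\<lambda>\<omega>. (g \<omega> $ i)\<^sup>2) \<in> borel_measurable M" using m by measurable
    show "AE \<omega> in M. norm ((g \<omega> $ i)\<^sup>2) \<le> norm ((norm (g \<omega>))\<^sup>2)"
    proof (intro AE_I2)
      fix \<omega>
      have "\<bar>g \<omega> $ i\<bar> \<le> \<bar>norm (g \<omega>)\<bar>" using component_le_norm_cart by simp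
      then have "(g \<omega> $ i)\<^sup>2 \<le> (norm (g \<omega>))\<^sup>2" by (simp only: abs_le_square_iff)
      then show "norm ((g \<omega> $ i)\<^sup>2) \<le> norm ((norm (g \<omega>))\<^sup>2)" by simp
    qed
  qed
qed

lemma comb_component:
  "(u \<omega> - (\<Sum>k\<in>K. B k *v F k \<omega>)) $ i = u \<omega> $ i - (\<Sum>k\<in>K. \<Sum>l\<in>UNIV. B k $ i $ l * F k \<omega> $ l)"
  by (simp add: sum_component matrix_vector_mult_def)

lemma L2V_comb:
  assumes "finite K" "L2V M u" "\<And>k. k \<in> K \<Longrightarrow> L2V M (F k)"
  shows "L2V M (\<lambda>\<omega>. u \<omega> - (\<Sum>k\<in>K. B k *v F k \<omega>))"
  unfolding L2V_def comb_component
  using assms unfolding L2V_def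
  by (auto intro!: L2s_diff L2s_sum L2s_cmult)

context prob_space
begin

lemma covm_comb:
  assumes "finite K" "L2V M u" "\<And>k. k \<in> K \<Longrightarrow> L2V M (F k)" "L2V M h"
  shows "covm M (\<lambda>\<omega>. u \<omega> - (\<Sum>k\<in>K. B k *v F k \<omega>)) h
       = covm M u h - (\<Sum>k\<in>K. B k ** covm M (F k) h)"
proof -
  have "covm M (\<lambda>\<omega>. u \<omega> - (\<Sum>k\<in>K. B k *v F k \<omega>)) h $ i $ j
      = (covm M u h - (\<Sum>k\<in>K. B k ** covm M (F k) h)) $ i $ j" for i j
  proof -
    have Lu: "L2s M (\<lambda>\<omega>. u \<omega> $ i)" and Lh: "L2s M (\<lambda>\<omega>. h \<omega> $ j)"
      and LF: "\<And>k l. k \<in> K \<Longrightarrow> L2s M (\<lambda>\<omega>. F k \<omega> $ l)"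
      using assms unfolding L2V_def by auto
    have LF2: "\<And>k. k \<in> K \<Longrightarrow> L2s M (\<lambda>\<omega>. \<Sum>l\<in>UNIV. B k $ i $ l * F k \<omega> $ l)"
      using LF by (auto intro!: L2s_sum L2s_cmult)
    have "covm M (\<lambda>\<omega>. u \<omega> - (\<Sum>k\<in>K. B k *v F k \<omega>)) h $ i $ j
       = cv M (\<lambda>\<omega>. u \<omega> $ i - (\<Sum>k\<in>K. \<Sum>l\<in>UNIV. B k $ i $ l * F k \<omega> $ l)) (\<lambda>\<omega>. h \<omega> $ j)"
      unfolding covm_entry comb_component ..
    also have "\<dots> = cv M (\<lambda>\<omega>. u \<omega> $ i) (\<lambda>\<omega>. h \<omega> $ j)
        - (\<Sum>k\<in>K. \<Sum>l\<in>UNIV. B k $ i $ l * cv M (\<lambda>\<omega>. F k \<omega> $ l) (\<lambda>\<omega>. h \<omega> $ j))"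
      using assms(1) Lu Lh LF LF2
      by (simp add: cv_diff L2s_sum cv_sum cv_cmult L2s_cmult)
    also have "\<dots> = (covm M u h - (\<Sum>k\<in>K. B k ** covm M (F k) h)) $ i $ j"
      by (simp add: sum_component matrix_matrix_mult_def covm_entry)
    finally show ?thesis .
  qed
  then show ?thesis by (simp add: vec_eq_iff)
qed

lemma covm_transpose: "covm M g h = transpose (covm M h g)"
  by (simp add: vec_eq_iff transpose_def covm_entry cv_sym)

lemma covm_kernel:
  assumes u: "L2V M u" and w: "L2V M w" and x: "covm M w w *v x = 0"
  shows "covm M u w *v x = 0"
proof -
  define b where "b = (\<lambda>\<omega>. \<Sum>j\<in>UNIV. x $ j * w \<omega> $ j)"
  have Lw: "\<And>j. L2s M (\<lambda>\<omega>. w \<omega> $ j)" using w unfolding L2V_def by auto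
  have Lb: "L2s M b" unfolding b_def using Lw by (auto intro!: L2s_sum L2s_cmult)
  have cvb: "cv M a b = (\<Sum>j\<in>UNIV. x $ j * cv M a (\<lambda>\<omega>. w \<omega> $ j))" if "L2s M a" for a
  proof -
    have "cv M a b = cv M b a" by (rule cv_sym)
    also have "\<dots> = (\<Sum>j\<in>UNIV. x $ j * cv M (\<lambda>\<omega>. w \<omega> $ j) a)"
      unfolding b_def using Lw that by (simp add: cv_sum L2s_cmult cv_cmult)
    finally show ?thesis by (simp add: cv_sym)
  qed
  have "cv M b b = (\<Sum>j\<in>UNIV. x $ j * cv M (\<lambda>\<omega>. w \<omega> $ j) b)"
    unfolding cvb[OF Lb] by (simp add: cv_sym)
  also have "\<dots> = (\<Sum>j\<in>UNIV. x $ j * (\<Sum>l\<in>UNIV. x $ l * cv M (\<lambda>\<omega>. w \<omega> $ j) (\<lambda>\<omega>. w \<omega> $ l)))"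
    using cvb[OF Lw] by simp
  also have "\<dots> = x \<bullet> (covm M w w *v x)"
    by (simp add: inner_vec_def matrix_vector_mult_def covm_entry mult.commute)
  finally have "cv M b b = x \<bullet> (covm M w w *v x)" .
  then have bb: "cv M b b = 0" using x by simp
  have "(covm M u w *v x) $ i = 0" for i
  proof -
    have Lu: "L2s M (\<lambda>\<omega>. u \<omega> $ i)" using u unfolding L2V_def by auto
    have "(covm M u w *v x) $ i = cv M (\<lambda>\<omega>. u \<omega> $ i) b"
      by (simp add: cvb[OF Lu] matrix_vector_mult_def covm_entry mult.commute)
    also have "\<dots> = 0" using cv_zero_var[OF Lu Lb bb] .
    finally show ?thesis .
  qed
  then show ?thesis by (simp add: vec_eq_iff)
qed

lemma covm_pinv:
  assumes u: "L2V M u" and w: "L2V M w"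
  shows "covm M u w ** pinv (covm M w w) ** covm M w w = covm M u w"
proof -
  let ?C = "covm M w w" and ?D = "covm M u w" and ?P = "pinv (covm M w w)"
  have CPC: "?C ** ?P ** ?C = ?C" using pinv_penrose[of ?C] unfolding penrose_def by auto
  have "?D ** (mat 1 - ?P ** ?C) = 0"
  proof (subst matrix_eq, intro allI)
    fix y
    have "?C *v ((mat 1 - ?P ** ?C) *v y) = 0"
        by (simp add: matrix_vector_mul_assoc matrix_diff_ldistrib matrix_mul_assoc CPC)
    then have "?D *v ((mat 1 - ?P ** ?C) *v y) = 0" by (rule covm_kernel[OF u w])
    then show "(?D ** (mat 1 - ?P ** ?C)) *v y = 0 *v y"
      by (simp add: matrix_vector_mul_assoc)
  qed
  then show ?thesis by (simp add: matrix_diff_ldistrib matrix_mul_assoc)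
qed

end


lemma matrix_diff_rdistrib: "((B::real^'n^'n) - C) ** A = B ** A - C ** A"
  by (simp add: matrix_matrix_mult_def vec_eq_iff algebra_simps sum_subtractf)

lemma matrix_add_rdistrib': "((B::real^'n^'n) + C) ** A = B ** A + C ** A"
  by (simp add: matrix_matrix_mult_def vec_eq_iff algebra_simps sum.distrib)

lemma transpose_zero': "transpose (0::real^'n^'n) = 0"
  by (simp add: transpose_def vec_eq_iff)

theorem lemma3:
  fixes M :: "'a measure" and p :: nat
    and u v :: "nat \<Rightarrow> 'a \<Rightarrow> real^'n"
    and A :: "nat \<Rightarrow> nat \<Rightarrow> real^'n^'n"
  assumes "prob_space M"
    and "\<And>i. i \<in> {1..p} \<Longrightarrow> L2vec M (u i)"
    and "v 1 = u 1"
    and "\<And>i. i \<in> {2..p} \<Longrightarrow>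
           v i = (\<lambda>\<omega>. u i \<omega> - (\<Sum>k = 1..i - 1.
             (covm M (u i) (v k) ** pinv (covm M (v k) (v k))
              + A i k ** (mat 1 - covm M (v k) (v k) ** pinv (covm M (v k) (v k))))
             *v v k \<omega>))"
  shows "\<forall>i \<in> {1..p}. \<forall>j \<in> {1..p}. i \<noteq> j \<longrightarrow> covm M (v i) (v j) = 0"
proof -
  interpret prob_space M by fact
  define Z where "Z i k = covm M (u i) (v k) ** pinv (covm M (v k) (v k))
              + A i k ** (mat 1 - covm M (v k) (v k) ** pinv (covm M (v k) (v k)))" for i k
  have vdef: "v i = (\<lambda>\<omega>. u i \<omega> - (\<Sum>k\<in>{1..i - 1}. Z i k *v v k \<omega>))" if "2 \<le> i" "i \<le> p" for i
    using assms(4)[of i] that unfolding Z_def by auto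
  have Lu: "L2V M (u i)" if "1 \<le> i" "i \<le> p" for i
    using assms(2)[of i] that by (auto intro: L2vec_L2V)
  have Lv: "1 \<le> i \<longrightarrow> i \<le> p \<longrightarrow> L2V M (v i)" for i
  proof (induction i rule: less_induct)
    case (less i)
    show ?case
    proof (intro impI)
      assume i: "1 \<le> i" "i \<le> p"
      show "L2V M (v i)"
      proof (cases "i = 1")
        case True then show ?thesis using assms(3) Lu i by simp
      next
        case False
        then have "2 \<le> i" using i by simp
        then show ?thesis unfolding vdef[OF \<open>2 \<le> i\<close> i(2)]
          using less i by (intro L2V_comb Lu) auto
      qed
    qed
  qed
  have O: "1 \<le> i \<longrightarrow> i \<le> p \<longrightarrow> (\<forall>j. 1 \<le> j \<and> j < i \<longrightarrow> covm M (v i) (v j) = 0)" for i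
  proof (induction i rule: less_induct)
    case (less i)
    show ?case
    proof (intro impI allI)
      fix j
      assume i: "1 \<le> i" "i \<le> p" and j: "1 \<le> j \<and> j < i"
      then have i2: "2 \<le> i" by simp
      let ?C = "covm M (v j) (v j)"
      have Lvj: "L2V M (v j)" using Lv j i by auto
      have zero: "covm M (v k) (v j) = 0" if "k \<in> {1..i - 1} - {j}" for k
      proof (cases "k < j")
        case True
        then have "covm M (v j) (v k) = 0" using less[of j] j i that by auto
        then show ?thesis by (subst covm_transpose) (simp add: transpose_zero')
      next
        case False
        then show ?thesis using less[of k] j i that by auto
      qed
      have jin: "j \<in> {1..i - 1}" using j by auto
      have "(\<Sum>k\<in>{1..i - 1}. Z i k ** covm M (v k) (v j)) = Z i j ** ?C
           + (\<Sum>k\<in>{1..i - 1} - {j}. Z i k ** covm M (v k) (v j))"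
        by (rule sum.remove[OF _ jin]) simp
      also have "(\<Sum>k\<in>{1..i - 1} - {j}. Z i k ** covm M (v k) (v j)) = 0"
        using zero by (intro sum.neutral) simp
      also have "Z i j ** ?C = covm M (u i) (v j)"
      proof -
        have CPC: "?C ** pinv ?C ** ?C = ?C" using pinv_penrose[of ?C] unfolding penrose_def by auto
        have "(mat 1 - ?C ** pinv ?C) ** ?C = 0"
          by (simp add: matrix_diff_rdistrib CPC)
        then have "Z i j ** ?C = covm M (u i) (v j) ** pinv ?C ** ?C"
          unfolding Z_def by (simp add: matrix_add_rdistrib' matrix_mul_assoc[symmetric])
        also have "\<dots> = covm M (u i) (v j)"
          by (rule covm_pinv[OF Lu Lvj]) (use i in auto)
        finally show ?thesis .
      qed
      finally have s: "(\<Sum>k\<in>{1..i - 1}. Z i k ** covm M (v k) (v j)) = covm M (u i) (v j)" by simp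
      have "covm M (v i) (v j) = covm M (u i) (v j) - (\<Sum>k\<in>{1..i - 1}. Z i k ** covm M (v k) (v j))"
        unfolding vdef[OF i2 i(2)]
        using Lu i Lv Lvj by (intro covm_comb) auto
      then show "covm M (v i) (v j) = 0" using s by simp
    qed
  qed
  show ?thesis
  proof (intro ballI impI)
    fix i j assume i: "i \<in> {1..p}" and j: "j \<in> {1..p}" and ne: "i \<noteq> j"
    show "covm M (v i) (v j) = 0"
    proof (cases "j < i")
      case True then show ?thesis using O[of i] i j by auto
    next
      case False
      then have "covm M (v j) (v i) = 0" using O[of j] i j ne by auto
      then show ?thesis by (subst covm_transpose) (simp add: transpose_zero')
    qed
  qed
qed


end
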